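(* Let $\lambda\in\Delta([2])$ be a prior over the binary state space $[2]$, let $\pi:[2]\to\Delta(\Sigma)$ be a signaling scheme with finite signal space $\Sigma$, and let $\mu$ be the distribution of posterior beliefs induced by $\pi$. Then there exist a positive integer $K$ and signaling schemes $\pi^{(1)},\dots,\pi^{(K)}$, each of the form $\pi^{(k)}:[2]\to\Delta(\{0,1\})$ (binary signal space), with induced distributions of posterior beliefs $\mu^{(k)}$, and a distribution $F$ over $[K]$, such that for every posterior belief $x\in\mathrm{supp}(\mu)$, $$\Pr[\mu=x]=\mathbb{E}_{k\sim F}\big[\Pr[\mu^{(k)}=x]\big].$$
   Context: For a signaling scheme $\pi$ with signal space $\Sigma$, when the state $\theta\sim\lambda$ and the signal $\sigma\sim\pi(\theta,\cdot)$ are drawn, the posterior belief is $x(\sigma)\in\Delta([2])$ with $x(\sigma)(i)=\lambda(i)\pi(i,\sigma)/\sum_j\lambda(j)\pi(j,\sigma)$; the induced distribution of posterior beliefs $\mu$ is the distribution of the random variable $x(\sigma)$, and $\Pr[\mu=x]$ denotes the probability that the realized posterior equals $x$. *)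

theory Defs
  imports "HOL-Probability.Probability_Mass_Function"
begin

text \<open>Binary state space [2] is modelled by the two-element type bool.\<close>

definition posterior :: "bool pmf \<Rightarrow> (bool \<Rightarrow> 's pmf) \<Rightarrow> 's \<Rightarrow> (bool \<Rightarrow> real)" where
  "posterior lam sch s =
     (\<lambda>i. pmf lam i * pmf (sch i) s / (\<Sum>j\<in>UNIV. pmf lam j * pmf (sch j) s))"

definition post_dist :: "bool pmf \<Rightarrow> (bool \<Rightarrow> 's pmf) \<Rightarrow> (bool \<Rightarrow> real) pmf" where
  "post_dist lam sch = map_pmf (posterior lam sch) (bind_pmf lam sch)"

end

theory Submission imports Defs begin

lemma pmf_post_dist:
  fixes lam :: "bool pmf" and \<pi> :: "bool \<Rightarrow> 'a::finite pmf"
  shows "pmf (post_dist lam \<pi>) x =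
    (\<Sum>\<sigma>\<in>UNIV. if posterior lam \<pi> \<sigma> = x then (\<Sum>i\<in>UNIV. pmf lam i * pmf (\<pi> i) \<sigma>) else 0)"
proof -
  have "pmf (post_dist lam \<pi>) x = measure (bind_pmf lam \<pi>) (posterior lam \<pi> -` {x})"
    by (simp add: post_dist_def pmf_map)
  also have "\<dots> = sum (pmf (bind_pmf lam \<pi>)) {\<sigma>\<in>UNIV. posterior lam \<pi> \<sigma> = x}"
    by (simp add: measure_measure_pmf_finite vimage_def)
  also have "\<dots> = (\<Sum>\<sigma>\<in>UNIV. if posterior lam \<pi> \<sigma> = x then pmf (bind_pmf lam \<pi>) \<sigma> else 0)"
    by (rule sum.inter_filter) simp
  also have "\<dots> = (\<Sum>\<sigma>\<in>UNIV. if posterior lam \<pi> \<sigma> = x then (\<Sum>i\<in>UNIV. pmf lam i * pmf (\<pi> i) \<sigma>) else 0)"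
    by (intro sum.cong refl) (simp add: pmf_bind integral_measure_pmf_real[where A=UNIV] mult.commute)
  finally show ?thesis .
qed

lemma posterior_scale:
  assumes "\<And>i. pmf (\<pi> i) \<sigma> = c * pmf (sch i) s" "c \<noteq> 0"
  shows "posterior lam \<pi> \<sigma> = posterior lam sch s"
    "(\<Sum>i\<in>UNIV. pmf lam i * pmf (\<pi> i) \<sigma>) = c * (\<Sum>i\<in>UNIV. pmf lam i * pmf (sch i) s)"
proof -
  have S: "(\<Sum>i\<in>UNIV. pmf lam i * pmf (\<pi> i) \<sigma>) = c * (\<Sum>i\<in>UNIV. pmf lam i * pmf (sch i) s)"
    by (simp add: assms(1) sum_distrib_left algebra_simps)
  then show "(\<Sum>i\<in>UNIV. pmf lam i * pmf (\<pi> i) \<sigma>) = c * (\<Sum>i\<in>UNIV. pmf lam i * pmf (sch i) s)" .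
  show "posterior lam \<pi> \<sigma> = posterior lam sch s"
    unfolding posterior_def
  proof
    fix i
    show "pmf lam i * pmf (\<pi> i) \<sigma> / (\<Sum>j\<in>UNIV. pmf lam j * pmf (\<pi> j) \<sigma>) =
          pmf lam i * pmf (sch i) s / (\<Sum>j\<in>UNIV. pmf lam j * pmf (sch j) s)"
      unfolding assms(1)
    proof -
      have S2: "(\<Sum>j\<in>UNIV. pmf lam j * (c * pmf (sch j) s)) = c * (\<Sum>j\<in>UNIV. pmf lam j * pmf (sch j) s)"
        by (simp add: sum_distrib_left algebra_simps)
      show "pmf lam i * (c * pmf (sch i) s) / (\<Sum>j\<in>UNIV. pmf lam j * (c * pmf (sch j) s)) =
          pmf lam i * pmf (sch i) s / (\<Sum>j\<in>UNIV. pmf lam j * pmf (sch j) s)"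
        unfolding S2 using assms(2) by simp
    qed
  qed
qed

lemma exists_pmf:
  fixes f :: "'a::finite \<Rightarrow> real"
  assumes "\<And>x. 0 \<le> f x" "sum f UNIV = 1"
  shows "\<exists>G. \<forall>x. pmf G x = f x"
proof -
  have "(\<integral>\<^sup>+x. ennreal (f x) \<partial>count_space UNIV) = 1"
    using assms by (simp add: nn_integral_count_space_finite)
  then show ?thesis using pmf_embed_pmf[of f] assms(1) by blast
qed

lemma split3:
  fixes a b :: "'s::finite \<Rightarrow> real"
  shows "sum f UNIV = sum f {s. b s < a s} + sum f {s. a s < b s} + sum f {s. a s = b s}"
proof -
  have "UNIV = ({s. b s < a s} \<union> {s. a s < b s}) \<union> {s. a s = b s}" by auto
  then have "sum f UNIV = sum f ({s. b s < a s} \<union> {s. a s < b s}) + sum f {s. a s = b s}"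
    by (subst sum.union_disjoint[symmetric]) auto
  also have "sum f ({s. b s < a s} \<union> {s. a s < b s}) = sum f {s. b s < a s} + sum f {s. a s < b s}"
    by (rule sum.union_disjoint) auto
  finally show ?thesis .
qed


lemma sum_if_mem: "(\<Sum>x\<in>(UNIV::'a::finite set). if x \<in> A then f x else 0) = sum f A"
  by (simp add: sum.If_cases)

lemma pairsum: "(\<Sum>p\<in>UNIV. f p) = (\<Sum>s\<in>(UNIV::'a::finite set). \<Sum>t\<in>(UNIV::'b::finite set). f (s,t))"
  by (simp add: sum.cartesian_product)

lemma part1: "(\<Sum>s\<in>(UNIV::'a::finite set). \<Sum>t\<in>(UNIV::'b::finite set). if s\<in>H \<and> t\<in>L then f s t else 0)
   = (\<Sum>s\<in>H. \<Sum>t\<in>L. f s t)"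
proof -
  have "(\<Sum>s\<in>(UNIV::'a set). \<Sum>t\<in>(UNIV::'b set). if s\<in>H \<and> t\<in>L then f s t else 0)
     = (\<Sum>s\<in>(UNIV::'a set). if s\<in>H then (\<Sum>t\<in>(UNIV::'b set). if t\<in>L then f s t else 0) else 0)"
    by (intro sum.cong) auto
  then show ?thesis by (simp add: sum_if_mem)
qed

lemma part2: "(\<Sum>s\<in>(UNIV::'a::finite set). \<Sum>t\<in>UNIV. if s = t \<and> s\<in>E then f s else 0)
   = (\<Sum>s\<in>E. f s)"
proof -
  have "(\<Sum>s\<in>(UNIV::'a set). \<Sum>t\<in>UNIV. if s = t \<and> s\<in>E then f s else 0)
     = (\<Sum>s\<in>(UNIV::'a set). if s\<in>E then f s else 0)"
    by (intro sum.cong) auto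
  then show ?thesis by (simp add: sum_if_mem)
qed

lemma sum_bool: "(\<Sum>\<sigma>\<in>(UNIV::bool set). f \<sigma>) = f True + f False"
  by (simp add: UNIV_bool add.commute)

lemma pmf_post_dist_bool:
  fixes \<pi> :: "bool \<Rightarrow> bool pmf"
  shows "pmf (post_dist lam \<pi>) x =
    (if posterior lam \<pi> True = x then (\<Sum>i\<in>UNIV. pmf lam i * pmf (\<pi> i) True) else 0) +
    (if posterior lam \<pi> False = x then (\<Sum>i\<in>UNIV. pmf lam i * pmf (\<pi> i) False) else 0)"
  unfolding pmf_post_dist by (rule sum_bool)

theorem mainTheorem7:
  fixes lam :: "bool pmf" and sch :: "bool \<Rightarrow> ('s::finite) pmf"
  shows "\<exists>K::nat. K > 0 \<and>
    (\<exists>(schs :: nat \<Rightarrow> bool \<Rightarrow> bool pmf) (F :: nat pmf).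
       set_pmf F \<subseteq> {1..K} \<and>
       (\<forall>x \<in> set_pmf (post_dist lam sch).
          pmf (post_dist lam sch) x =
          measure_pmf.expectation F (\<lambda>k. pmf (post_dist lam (schs k)) x)))"
proof -
  define a where "a = pmf (sch True)"
  define b where "b = pmf (sch False)"
  define H where "H = {s. b s < a s}"
  define L where "L = {s. a s < b s}"
  define E where "E = {s. a s = b s}"
  define W where "W = (\<Sum>s\<in>H. a s - b s)"
  define N where "N = (\<lambda>s t. a s * b t - a t * b s)"
  define P where "P = posterior lam sch"
  define m where "m = (\<lambda>\<sigma>. \<Sum>i\<in>UNIV. pmf lam i * pmf (sch i) \<sigma>)"
  define w where "w = (\<lambda>p::'s\<times>'s. (if fst p \<in> H \<and> snd p \<in> L then N (fst p) (snd p) / W else 0)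
      + (if fst p = snd p \<and> fst p \<in> E then a (fst p) else 0))"
  define sc where "sc = (\<lambda>p::'s\<times>'s. if fst p \<in> H \<and> snd p \<in> L then
      (\<lambda>i. bernoulli_pmf ((b (snd p) - a (snd p)) / N (fst p) (snd p) * pmf (sch i) (fst p)))
      else (\<lambda>i. return_pmf True))"
  have a0: "\<And>s. 0 \<le> a s" and b0: "\<And>s. 0 \<le> b s" by (simp_all add: a_def b_def)
  have sa: "sum a UNIV = 1" unfolding a_def by (rule sum_pmf_eq_1) auto
  have sb: "sum b UNIV = 1" unfolding b_def by (rule sum_pmf_eq_1) auto
  have lam1: "(\<Sum>i\<in>UNIV. pmf lam i) = 1" by (rule sum_pmf_eq_1) auto
  have HL: "(\<Sum>s\<in>H. a s - b s) = (\<Sum>t\<in>L. b t - a t)"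
  proof -
    have "0 = (\<Sum>s\<in>UNIV. a s - b s)" using sa sb by (simp add: sum_subtractf)
    also have "\<dots> = (\<Sum>s\<in>H. a s - b s) + (\<Sum>s\<in>L. a s - b s) + (\<Sum>s\<in>E. a s - b s)"
      unfolding H_def L_def E_def by (rule split3)
    also have "(\<Sum>s\<in>E. a s - b s) = 0" unfolding E_def by simp
    also have "(\<Sum>s\<in>L. a s - b s) = - (\<Sum>t\<in>L. b t - a t)" by (simp add: sum_negf[symmetric])
    finally show ?thesis by simp
  qed
  have Npos: "0 < N s t" if "s \<in> H" "t \<in> L" for s t
  proof -
    have "b s * a t \<le> b s * b t" using that b0 by (intro mult_left_mono) (auto simp: L_def)
    also have "b s * b t < a s * b t" using that b0[of t] a0[of t]
      by (intro mult_strict_right_mono) (auto simp: L_def H_def)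
    finally show ?thesis by (simp add: N_def mult.commute)
  qed
  have W0: "0 \<le> W" unfolding W_def H_def by (rule sum_nonneg) auto
  have Wpos: "0 < W" if "H \<noteq> {}"
    unfolding W_def using that by (intro sum_pos) (auto simp: H_def)
  have Lempty: "L = {}" if "H = {}"
  proof (rule ccontr)
    assume "L \<noteq> {}"
    then have "0 < (\<Sum>t\<in>L. b t - a t)" by (intro sum_pos) (auto simp: L_def)
    then show False using HL that by simp
  qed
  have Nnn: "0 \<le> N s t / W" if "s \<in> H" "t \<in> L" for s t
    using Npos[OF that] W0 by (simp add: less_imp_le)
  have w0: "0 \<le> w p" for p
    unfolding w_def using Nnn a0 by (intro add_nonneg_nonneg) auto
  have part1': "(\<Sum>s\<in>UNIV. \<Sum>t\<in>UNIV. if s\<in>H \<and> t\<in>L then f s t else 0) = (\<Sum>s\<in>H. \<Sum>t\<in>L. f s t)"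
    for f :: "'s \<Rightarrow> 's \<Rightarrow> real" by (rule part1)
  have spl: "sum f UNIV = sum f H + sum f L + sum f E" for f :: "'s \<Rightarrow> real"
    unfolding H_def L_def E_def by (rule split3)
  have WH: "W = sum a H - sum b H" unfolding W_def by (simp add: sum_subtractf)
  have WL: "W = sum b L - sum a L" using HL unfolding W_def by (simp add: sum_subtractf)
  have AEBE: "sum a E = sum b E" unfolding E_def by (rule sum.cong) auto
  have NS: "(\<Sum>s\<in>H. \<Sum>t\<in>L. N s t) = sum a H * sum b L - sum a L * sum b H"
    by (simp add: N_def sum_subtractf sum_product mult.commute) (rule sum.swap)
  have w1: "sum w UNIV = 1"
  proof -
    have "sum w UNIV = (\<Sum>s\<in>UNIV. \<Sum>t\<in>UNIV. (if s\<in>H \<and> t\<in>L then N s t / W else 0)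
        + (if s = t \<and> s \<in> E then a s else 0))"
      by (subst pairsum) (unfold w_def fst_conv snd_conv, rule refl)
    also have "\<dots> = (\<Sum>s\<in>H. \<Sum>t\<in>L. N s t / W) + (\<Sum>s\<in>E. a s)"
      by (simp add: sum.distrib part1' part2)
    also have "\<dots> = (\<Sum>s\<in>H. \<Sum>t\<in>L. N s t) / W + sum a E"
      by (simp add: sum_divide_distrib)
    also have "\<dots> = 1"
    proof (cases "H = {}")
      case True
      then have "L = {}" by (rule Lempty)
      then show ?thesis using True spl[of a] sa by simp
    next
      case False
      then have "W \<noteq> 0" using Wpos by force
      have "sum a H * sum b L - sum a L * sum b H
          = (sum b H + W) * (sum a L + W) - sum a L * sum b H" using WH WL by simp
      also have "\<dots> = W * (sum b H + W + sum a L)" by (simp add: algebra_simps)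
      also have "\<dots> = W * (1 - sum a E)" using WH spl[of a] sa by simp
      finally show ?thesis using NS \<open>W \<noteq> 0\<close> by simp
    qed
    finally show ?thesis .
  qed
  define g where "g = (\<lambda>x \<sigma>. if P \<sigma> = x then m \<sigma> else 0)"
  have lhs: "pmf (post_dist lam sch) x = (\<Sum>\<sigma>\<in>UNIV. g x \<sigma>)" for x
    unfolding g_def P_def m_def by (rule pmf_post_dist)
  have c1: "pmf (post_dist lam (sc (s,t))) x = (b t - a t) / N s t * g x s + (a s - b s) / N s t * g x t"
    if st: "s \<in> H" "t \<in> L" for s t x
  proof -
    define \<alpha> where "\<alpha> = (b t - a t) / N s t"
    define \<beta> where "\<beta> = (a s - b s) / N s t"
    have Np: "0 < N s t" using Npos st .
    have ap: "0 < \<alpha>" unfolding \<alpha>_def using Np st by (auto simp: L_def)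
    have bp: "0 < \<beta>" unfolding \<beta>_def using Np st by (auto simp: H_def)
    have comp: "1 - \<alpha> * pmf (sch i) s = \<beta> * pmf (sch i) t" for i
    proof (cases i)
      case True
      have "1 - \<alpha> * a s = \<beta> * a t" unfolding \<alpha>_def \<beta>_def using Np
        by (simp add: field_simps N_def)
      then show ?thesis using True by (simp add: a_def)
    next
      case False
      have "1 - \<alpha> * b s = \<beta> * b t" unfolding \<alpha>_def \<beta>_def using Np
        by (simp add: field_simps N_def)
      then show ?thesis using False by (simp add: b_def)
    qed
    have p0: "0 \<le> \<alpha> * pmf (sch i) s" for i using ap by simp
    have p1: "\<alpha> * pmf (sch i) s \<le> 1" for i using comp[of i] bp
      by (metis diff_ge_0_iff_ge mult_nonneg_nonneg less_imp_le pmf_nonneg)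
    have scst: "sc (s,t) = (\<lambda>i. bernoulli_pmf (\<alpha> * pmf (sch i) s))"
      unfolding sc_def \<alpha>_def using st by simp
    have eT: "pmf (sc (s,t) i) True = \<alpha> * pmf (sch i) s" for i
      unfolding scst using p0 p1 by simp
    have eF: "pmf (sc (s,t) i) False = \<beta> * pmf (sch i) t" for i
      unfolding scst using p0[of i] p1[of i] comp[of i] by simp
    have an0: "\<alpha> \<noteq> 0" and bn0: "\<beta> \<noteq> 0" using ap bp by auto
    note pT = posterior_scale[of "sc (s,t)" True \<alpha> sch s lam, OF eT an0]
    note pF = posterior_scale[of "sc (s,t)" False \<beta> sch t lam, OF eF bn0]
    show ?thesis
      unfolding pmf_post_dist_bool pT pF
      using ap bp
      by (simp add: g_def P_def m_def \<alpha>_def[symmetric] \<beta>_def[symmetric])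
  qed
  have c2: "pmf (post_dist lam (sc (s,t))) x = (if pmf lam = x then 1 else 0)"
    if st: "\<not> (s \<in> H \<and> t \<in> L)" for s t x
  proof -
    have scst: "sc (s,t) = (\<lambda>i. return_pmf True)"
      unfolding sc_def using st by auto
    have post: "posterior lam (\<lambda>i. return_pmf True) True = pmf lam"
      unfolding posterior_def using lam1 by simp
    show ?thesis
      unfolding pmf_post_dist_bool scst post using lam1 by auto
  qed
  have c3: "a s * (if pmf lam = x then 1 else 0) = g x s" if "s \<in> E" for s x
  proof -
    have ab: "pmf (sch i) s = a s" for i using that by (cases i) (auto simp: a_def b_def E_def)
    have ms: "m s = a s" unfolding m_def ab using lam1 by (simp add: sum_distrib_right[symmetric])
    show ?thesis
    proof (cases "a s = 0")
      case True then show ?thesis using ms by (simp add: g_def)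
    next
      case False
      have "P s = pmf lam" unfolding P_def posterior_def ab
        using lam1 False by (simp add: sum_distrib_right[symmetric])
      then show ?thesis using ms by (simp add: g_def)
    qed
  qed
  have key: "pmf (post_dist lam sch) x = (\<Sum>p\<in>UNIV. w p * pmf (post_dist lam (sc p)) x)" for x
  proof -
    define V where "V = (\<lambda>p. pmf (post_dist lam (sc p)) x)"
    have "(\<Sum>p\<in>UNIV. w p * V p) = (\<Sum>s\<in>UNIV. \<Sum>t\<in>UNIV.
        (if s\<in>H \<and> t\<in>L then N s t / W * V (s,t) else 0) + (if s = t \<and> s \<in> E then a s * V (s,s) else 0))"
      by (subst pairsum) (intro sum.cong refl, auto simp: w_def algebra_simps)
    also have "\<dots> = (\<Sum>s\<in>H. \<Sum>t\<in>L. N s t / W * V (s,t)) + (\<Sum>s\<in>E. a s * V (s,s))"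
      by (simp add: sum.distrib part1' part2)
    also have "(\<Sum>s\<in>E. a s * V (s,s)) = (\<Sum>s\<in>E. g x s)"
    proof (rule sum.cong[OF refl])
      fix s assume "s \<in> E"
      then have "s \<notin> H" by (auto simp: E_def H_def)
      then show "a s * V (s,s) = g x s" using c2[of s s x] c3[OF \<open>s \<in> E\<close>, of x] by (simp add: V_def)
    qed
    also have "(\<Sum>s\<in>H. \<Sum>t\<in>L. N s t / W * V (s,t))
        = (\<Sum>s\<in>H. \<Sum>t\<in>L. (b t - a t) / W * g x s + (a s - b s) / W * g x t)"
    proof (intro sum.cong refl)
      fix s t assume st: "s \<in> H" "t \<in> L"
      have "N s t \<noteq> 0" using Npos[OF st] by simp
      then show "N s t / W * V (s,t) = (b t - a t) / W * g x s + (a s - b s) / W * g x t"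
        unfolding V_def c1[OF st] by (cases "W = 0") (simp_all add: field_simps)
    qed
    also have "\<dots> = (\<Sum>s\<in>H. (\<Sum>t\<in>L. b t - a t) / W * g x s) + (\<Sum>t\<in>L. (\<Sum>s\<in>H. a s - b s) / W * g x t)"
      by (simp add: sum.distrib sum_distrib_right sum_divide_distrib) (rule sum.swap)
    also have "\<dots> = sum (g x) H + sum (g x) L"
    proof (cases "H = {}")
      case True
      then show ?thesis using Lempty by simp
    next
      case False
      then have "W \<noteq> 0" using Wpos by force
      then show ?thesis using HL by (simp add: W_def[symmetric])
    qed
    finally have "(\<Sum>p\<in>UNIV. w p * V p) = sum (g x) H + sum (g x) L + sum (g x) E" .
    then show ?thesis using lhs[of x] spl[of "g x"] by (simp add: V_def)
  qed
  obtain G where G: "\<And>p. pmf G p = w p" using exists_pmf[of w] w0 w1 by blast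
  define enc where "enc = (\<lambda>p::'s\<times>'s. to_nat p + 1)"
  define K where "K = Max (range enc)"
  have encK: "enc p \<in> {1..K}" for p
    unfolding K_def by (auto simp: enc_def intro!: Max_ge)
  show ?thesis
  proof (intro exI conjI ballI)
    show "0 < K" using encK[of undefined] by simp
    show "set_pmf (map_pmf enc G) \<subseteq> {1..K}" using encK by auto
    fix x
    have "measure_pmf.expectation (map_pmf enc G) (\<lambda>k. pmf (post_dist lam (sc (from_nat (k - 1)))) x)
        = measure_pmf.expectation G (\<lambda>p. pmf (post_dist lam (sc p)) x)"
      by (simp add: enc_def)
    also have "\<dots> = (\<Sum>p\<in>UNIV. pmf (post_dist lam (sc p)) x * pmf G p)"
      by (rule integral_measure_pmf_real) auto
    also have "\<dots> = pmf (post_dist lam sch) x"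
      unfolding key G by (simp add: mult.commute)
    finally show "pmf (post_dist lam sch) x = measure_pmf.expectation (map_pmf enc G)
        (\<lambda>k. pmf (post_dist lam ((\<lambda>k. sc (from_nat (k - 1))) k)) x)" by simp
  qed
qed

end
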